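(* Let $k\subseteq K$ be fields with $\operatorname{char}k=p>0$, let $m$ be a natural number, let $X$ be a power series indeterminate over $K$, and let $D$ be an integral domain with $k+X^mK[[X]]\subseteq D\subseteq K[[X]]$. Let $M=D\cap XK[[X]]$, and regard $D/M$ as a subfield of $K$ via the map $K[[X]]\to K$, $f\mapsto f(0)$. (i) If $k\subseteq K$ is a root extension, then $D$ is a quasilocal AV-domain whose integral closure is $K[[X]]$. (ii) If $k\subseteq K$ is a bounded root extension, then $D$ is a quasilocal API-domain whose integral closure is $K[[X]]$. (iii) Assuming $k\subseteq K$ is a root extension, $(D,M)$ is an API-domain if and only if $D/M\subseteq K$ is a bounded root extension. (iv) If moreover $[K:k]<\infty$, then $D$ is a complete local AV-domain in case (i), and a complete local API-domain in case (ii).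
   Context: An extension of commutative rings $R\subseteq S$ is a root extension if for each $s\in S$ there is a natural number $n$ with $s^n\in R$, and a bounded root extension if there is a single natural number $n$ with $s^n\in R$ for all $s\in S$. An integral domain $D$ is an AV-domain if for all nonzero $a,b\in D$ there is a natural number $n$ with $a^n\mid b^n$ or $b^n\mid a^n$ in $D$. $D$ is an API-domain if for every nonempty subset $\{d_\alpha\}$ of $D\setminus\{0\}$ there is $n$ with the ideal $(\{d_\alpha^n\})$ principal. Quasilocal means having a unique maximal ideal; local means Noetherian and quasilocal; complete local means local and complete in the $M$-adic topology. The integral closure is taken in the quotient field. *)

theory Defs
  imports "HOL-Computational_Algebra.Formal_Laurent_Series"
begin

definition subring :: "'a::comm_ring_1 set \<Rightarrow> bool" where
  "subring D \<longleftrightarrow> 0 \<in> D \<and> 1 \<in> D \<and> (\<forall>x\<in>D. \<forall>y\<in>D. x + y \<in> D \<and> x - y \<in> D \<and> x * y \<in> D)"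

definition subfield :: "'a::field set \<Rightarrow> bool" where
  "subfield k \<longleftrightarrow> subring k \<and> (\<forall>x\<in>k. x \<noteq> 0 \<longrightarrow> inverse x \<in> k)"

definition ideal_in :: "'a::comm_ring_1 set \<Rightarrow> 'a set \<Rightarrow> bool" where
  "ideal_in D I \<longleftrightarrow> I \<subseteq> D \<and> 0 \<in> I \<and> (\<forall>x\<in>I. \<forall>y\<in>I. x + y \<in> I) \<and> (\<forall>r\<in>D. \<forall>x\<in>I. r * x \<in> I)"

definition maximal_ideal_in :: "'a::comm_ring_1 set \<Rightarrow> 'a set \<Rightarrow> bool" where
  "maximal_ideal_in D M \<longleftrightarrow> ideal_in D M \<and> M \<noteq> D \<and>
     (\<forall>J. ideal_in D J \<and> M \<subseteq> J \<longrightarrow> J = M \<or> J = D)"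

definition quasilocal :: "'a::comm_ring_1 set \<Rightarrow> bool" where
  "quasilocal D \<longleftrightarrow> (\<exists>!M. maximal_ideal_in D M)"

definition gen_ideal :: "'a::comm_ring_1 set \<Rightarrow> 'a set \<Rightarrow> 'a set" where
  "gen_ideal D A = \<Inter>{I. ideal_in D I \<and> A \<subseteq> I}"

definition principal_in :: "'a::comm_ring_1 set \<Rightarrow> 'a set \<Rightarrow> bool" where
  "principal_in D I \<longleftrightarrow> (\<exists>g\<in>D. I = {g * c | c. c \<in> D})"

definition dvd_in :: "'a::comm_ring_1 set \<Rightarrow> 'a \<Rightarrow> 'a \<Rightarrow> bool" where
  "dvd_in D a b \<longleftrightarrow> (\<exists>c\<in>D. b = a * c)"

definition root_extension :: "'a::comm_ring_1 set \<Rightarrow> 'a set \<Rightarrow> bool" where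
  "root_extension R S \<longleftrightarrow> R \<subseteq> S \<and> (\<forall>s\<in>S. \<exists>n>0. s ^ n \<in> R)"

definition bounded_root_extension :: "'a::comm_ring_1 set \<Rightarrow> 'a set \<Rightarrow> bool" where
  "bounded_root_extension R S \<longleftrightarrow> R \<subseteq> S \<and> (\<exists>n>0. \<forall>s\<in>S. s ^ n \<in> R)"

definition AV_domain :: "'a::idom set \<Rightarrow> bool" where
  "AV_domain D \<longleftrightarrow> subring D \<and>
     (\<forall>a\<in>D - {0}. \<forall>b\<in>D - {0}. \<exists>n>0. dvd_in D (a ^ n) (b ^ n) \<or> dvd_in D (b ^ n) (a ^ n))"

definition API_domain :: "'a::idom set \<Rightarrow> bool" where
  "API_domain D \<longleftrightarrow> subring D \<and>
     (\<forall>S. S \<noteq> {} \<and> S \<subseteq> D - {0} \<longrightarrow> (\<exists>n>0. principal_in D (gen_ideal D ((\<lambda>d. d ^ n) ` S))))"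

definition noetherian_in :: "'a::comm_ring_1 set \<Rightarrow> bool" where
  "noetherian_in D \<longleftrightarrow> (\<forall>I. ideal_in D I \<longrightarrow> (\<exists>A. finite A \<and> A \<subseteq> I \<and> I = gen_ideal D A))"

fun ideal_pow :: "'a::comm_ring_1 set \<Rightarrow> 'a set \<Rightarrow> nat \<Rightarrow> 'a set" where
  "ideal_pow D M 0 = D"
| "ideal_pow D M (Suc n) = gen_ideal D {x * y | x y. x \<in> ideal_pow D M n \<and> y \<in> M}"

definition adic_complete :: "'a::comm_ring_1 set \<Rightarrow> 'a set \<Rightarrow> bool" where
  "adic_complete D M \<longleftrightarrow>
     (\<Inter>n. ideal_pow D M n) = {0} \<and>
     (\<forall>f::nat \<Rightarrow> 'a. (\<forall>i. f i \<in> D) \<and> (\<forall>n. \<exists>N. \<forall>i\<ge>N. \<forall>j\<ge>N. f i - f j \<in> ideal_pow D M n) \<longrightarrow>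
        (\<exists>L\<in>D. \<forall>n. \<exists>N. \<forall>i\<ge>N. f i - L \<in> ideal_pow D M n))"

definition complete_local :: "'a::comm_ring_1 set \<Rightarrow> bool" where
  "complete_local D \<longleftrightarrow> noetherian_in D \<and> quasilocal D \<and>
     (\<forall>M. maximal_ideal_in D M \<longrightarrow> adic_complete D M)"

text \<open>Quotient field of a subring D of K[[X]], realised inside K((X)).\<close>
definition quot_field_fls :: "'a::field fps set \<Rightarrow> 'a fls set" where
  "quot_field_fls D = {fps_to_fls a / fps_to_fls b | a b. a \<in> D \<and> b \<in> D \<and> b \<noteq> 0}"

definition integral_over_fls :: "'a::field fps set \<Rightarrow> 'a fls \<Rightarrow> bool" where
  "integral_over_fls D x \<longleftrightarrow> (\<exists>n c. (\<forall>i<n. c i \<in> D) \<and>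
      x ^ n + (\<Sum>i<n. fps_to_fls (c i) * x ^ i) = 0)"

definition integral_closure_fls :: "'a::field fps set \<Rightarrow> 'a fls set" where
  "integral_closure_fls D = {x \<in> quot_field_fls D. integral_over_fls D x}"

definition finite_degree :: "'a::field set \<Rightarrow> bool" where
  "finite_degree k \<longleftrightarrow> (\<exists>B. finite B \<and> (\<forall>x::'a. \<exists>c. (\<forall>b\<in>B. c b \<in> k) \<and> x = (\<Sum>b\<in>B. c b * b)))"

end

theory Submission
  imports Defs
begin
unbundle fps_syntax

definition lspan :: "'b::comm_ring_1 set \<Rightarrow> ('i \<Rightarrow> 'b) \<Rightarrow> 'i set \<Rightarrow> 'b set" where
  "lspan Sc g I = {(\<Sum>i\<in>I. c i * g i) | c. \<forall>i\<in>I. c i \<in> Sc}"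

definition lsubspace :: "'b::comm_ring_1 set \<Rightarrow> 'b set \<Rightarrow> bool" where
  "lsubspace Sc V \<longleftrightarrow> 0 \<in> V \<and> (\<forall>x\<in>V. \<forall>y\<in>V. x + y \<in> V) \<and> (\<forall>c\<in>Sc. \<forall>x\<in>V. c * x \<in> V)"

lemma lspan_empty: "lspan Sc g {} = {0}"
  unfolding lspan_def by auto

lemma lspan_insert:
  assumes "finite I" "i \<notin> I"
  shows "v \<in> lspan Sc g (insert i I) \<longleftrightarrow> (\<exists>a\<in>Sc. \<exists>w\<in>lspan Sc g I. v = a * g i + w)"
proof
  assume "v \<in> lspan Sc g (insert i I)"
  then obtain c where c: "\<forall>j\<in>insert i I. c j \<in> Sc" "v = (\<Sum>j\<in>insert i I. c j * g j)"
    unfolding lspan_def by blast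
  have "v = c i * g i + (\<Sum>j\<in>I. c j * g j)" using c(2) assms by simp
  moreover have "(\<Sum>j\<in>I. c j * g j) \<in> lspan Sc g I" unfolding lspan_def using c(1) by blast
  ultimately show "\<exists>a\<in>Sc. \<exists>w\<in>lspan Sc g I. v = a * g i + w" using c(1) by blast
next
  assume "\<exists>a\<in>Sc. \<exists>w\<in>lspan Sc g I. v = a * g i + w"
  then obtain a w where aw: "a \<in> Sc" "w \<in> lspan Sc g I" "v = a * g i + w" by blast
  then obtain c where c: "\<forall>j\<in>I. c j \<in> Sc" "w = (\<Sum>j\<in>I. c j * g j)"
    unfolding lspan_def by blast
  let ?c = "c(i := a)"
  have "(\<Sum>j\<in>insert i I. ?c j * g j) = a * g i + (\<Sum>j\<in>I. ?c j * g j)" using assms by simp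
  also have "(\<Sum>j\<in>I. ?c j * g j) = (\<Sum>j\<in>I. c j * g j)"
    using assms(2) by (intro sum.cong) auto
  finally have "v = (\<Sum>j\<in>insert i I. ?c j * g j)" using aw c by simp
  moreover have "\<forall>j\<in>insert i I. ?c j \<in> Sc" using c aw by auto
  ultimately show "v \<in> lspan Sc g (insert i I)" unfolding lspan_def by blast
qed

lemma lspan_lsubspace:
  assumes Sc: "subring Sc"
  shows "lsubspace Sc (lspan Sc g I)"
proof -
  have S0: "0 \<in> Sc" and Sadd: "\<And>a b. a \<in> Sc \<Longrightarrow> b \<in> Sc \<Longrightarrow> a + b \<in> Sc"
    and Smul: "\<And>a b. a \<in> Sc \<Longrightarrow> b \<in> Sc \<Longrightarrow> a * b \<in> Sc"
    using Sc unfolding subring_def by auto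
  show ?thesis unfolding lsubspace_def
  proof (intro conjI ballI)
    show "0 \<in> lspan Sc g I" unfolding lspan_def
      by (intro CollectI exI[of _ "\<lambda>_. 0"]) (simp add: S0)
  next
    fix x y assume "x \<in> lspan Sc g I" "y \<in> lspan Sc g I"
    then obtain c d where c: "\<forall>i\<in>I. c i \<in> Sc" "x = (\<Sum>i\<in>I. c i * g i)"
      and d: "\<forall>i\<in>I. d i \<in> Sc" "y = (\<Sum>i\<in>I. d i * g i)" unfolding lspan_def by blast
    have "x + y = (\<Sum>i\<in>I. (\<lambda>i. c i + d i) i * g i)"
      using c d by (simp add: sum.distrib distrib_right)
    moreover have "\<forall>i\<in>I. (\<lambda>i. c i + d i) i \<in> Sc" using c d Sadd by simp
    ultimately show "x + y \<in> lspan Sc g I" unfolding lspan_def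
      by (intro CollectI exI[of _ "\<lambda>i. c i + d i"]) simp
  next
    fix a x assume a: "a \<in> Sc" and "x \<in> lspan Sc g I"
    then obtain c where c: "\<forall>i\<in>I. c i \<in> Sc" "x = (\<Sum>i\<in>I. c i * g i)" unfolding lspan_def by blast
    have "a * x = (\<Sum>i\<in>I. (\<lambda>i. a * c i) i * g i)"
      using c by (simp add: sum_distrib_left mult_ac)
    moreover have "\<forall>i\<in>I. (\<lambda>i. a * c i) i \<in> Sc" using c a Smul by simp
    ultimately show "a * x \<in> lspan Sc g I" unfolding lspan_def
      by (intro CollectI exI[of _ "\<lambda>i. a * c i"]) simp
  qed
qed

lemma fin_sub:
  assumes Sc: "subring Sc" and inv: "\<And>c. c \<in> Sc \<Longrightarrow> c \<noteq> 0 \<Longrightarrow> \<exists>c'\<in>Sc. c' * c = 1"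
    and fin: "finite I"
  shows "V \<subseteq> lspan Sc g I \<Longrightarrow> lsubspace Sc V \<Longrightarrow> \<exists>A. finite A \<and> A \<subseteq> V \<and> V \<subseteq> lspan Sc id A"
  using fin
proof (induction I arbitrary: V rule: finite_induct)
  case empty
  have "V \<subseteq> lspan Sc id {}" using empty by (simp add: lspan_empty)
  thus ?case by blast
next
  case (insert i I)
  have S0: "0 \<in> Sc" and Sdiff: "\<And>a b. a \<in> Sc \<Longrightarrow> b \<in> Sc \<Longrightarrow> a - b \<in> Sc"
    and Smul: "\<And>a b. a \<in> Sc \<Longrightarrow> b \<in> Sc \<Longrightarrow> a * b \<in> Sc"
    using Sc unfolding subring_def by auto
  have Vsub: "lsubspace Sc V" by fact
  have V0: "0 \<in> V" and Vadd: "\<And>x y. x \<in> V \<Longrightarrow> y \<in> V \<Longrightarrow> x + y \<in> V"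
    and Vmul: "\<And>a x. a \<in> Sc \<Longrightarrow> x \<in> V \<Longrightarrow> a * x \<in> V"
    using Vsub unfolding lsubspace_def by auto
  let ?V' = "V \<inter> lspan Sc g I"
  have LS: "lsubspace Sc (lspan Sc g I)" by (rule lspan_lsubspace[OF Sc])
  have "lsubspace Sc ?V'" using Vsub LS unfolding lsubspace_def by auto
  then obtain A' where A': "finite A'" "A' \<subseteq> ?V'" "?V' \<subseteq> lspan Sc id A'"
    using insert.IH[of ?V'] by blast
  show ?case
  proof (cases "V \<subseteq> lspan Sc g I")
    case True
    thus ?thesis using A' by blast
  next
    case False
    then obtain v0 where v0: "v0 \<in> V" "v0 \<notin> lspan Sc g I" by blast
    from v0(1) insert.prems(1) have "v0 \<in> lspan Sc g (insert i I)" by blast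
    then obtain a0 w0 where aw0: "a0 \<in> Sc" "w0 \<in> lspan Sc g I" "v0 = a0 * g i + w0"
      using lspan_insert[OF insert.hyps] by blast
    have "a0 \<noteq> 0" using aw0 v0(2) by auto
    then obtain a' where a': "a' \<in> Sc" "a' * a0 = 1" using inv aw0(1) by blast
    have v0A: "v0 \<notin> A'" using A'(2) v0(2) by blast
    have "V \<subseteq> lspan Sc id (insert v0 A')"
    proof
      fix v assume v: "v \<in> V"
      hence "v \<in> lspan Sc g (insert i I)" using insert.prems(1) by blast
      then obtain a w where aw: "a \<in> Sc" "w \<in> lspan Sc g I" "v = a * g i + w"
        using lspan_insert[OF insert.hyps] by blast
      let ?t = "a * a'"
      have t: "?t \<in> Sc" using aw a' Smul by blast
      have "v - ?t * v0 = w + (0 - ?t) * w0"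
        using aw(3) aw0(3) a'(2) by (simp add: algebra_simps) (metis mult.assoc mult.commute mult.left_commute mult_1_right)
      moreover have "w + (0 - ?t) * w0 \<in> lspan Sc g I"
        using LS aw(2) aw0(2) Sdiff[OF S0 t] unfolding lsubspace_def by blast
      moreover have "v - ?t * v0 \<in> V"
      proof -
        have "(0 - ?t) * v0 \<in> V" using Vmul Sdiff[OF S0 t] v0(1) by blast
        hence "v + (0 - ?t) * v0 \<in> V" using Vadd v by blast
        thus ?thesis by (simp add: algebra_simps)
      qed
      ultimately have "v - ?t * v0 \<in> lspan Sc id A'" using A'(3) by auto
      then obtain e where e: "\<forall>x\<in>A'. e x \<in> Sc" "v - ?t * v0 = (\<Sum>x\<in>A'. e x * id x)"
        unfolding lspan_def by blast
      have "v = ?t * id v0 + (\<Sum>x\<in>A'. e x * id x)" using e(2) by (simp add: algebra_simps)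
      moreover have "(\<Sum>x\<in>A'. e x * id x) \<in> lspan Sc id A'" unfolding lspan_def using e(1) by blast
      ultimately show "v \<in> lspan Sc id (insert v0 A')"
        using lspan_insert[OF A'(1) v0A] t by blast
    qed
    moreover have "finite (insert v0 A')" "insert v0 A' \<subseteq> V" using A' v0 by auto
    ultimately show ?thesis by blast
  qed
qed

locale thm7 =
  fixes k :: "'a::field set" and D :: "'a fps set" and m :: nat
  assumes k: "subfield k" and chp: "prime CHAR('a)" and D: "subring D"
    and lower: "{fps_const c + fps_X ^ m * f | c f. c \<in> k} \<subseteq> D"
begin

lemma k0: "0 \<in> k" "1 \<in> k"
  and kadd: "a \<in> k \<Longrightarrow> b \<in> k \<Longrightarrow> a + b \<in> k"
  and kdiff: "a \<in> k \<Longrightarrow> b \<in> k \<Longrightarrow> a - b \<in> k"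
  and kmult: "a \<in> k \<Longrightarrow> b \<in> k \<Longrightarrow> a * b \<in> k"
  and kinv: "a \<in> k \<Longrightarrow> inverse a \<in> k"
  using k unfolding subfield_def subring_def by auto

lemma kpow: "a \<in> k \<Longrightarrow> a ^ n \<in> k"
  by (induction n) (auto intro: k0 kmult)

lemma D0: "0 \<in> D" and D1: "1 \<in> D"
  and Dadd: "a \<in> D \<Longrightarrow> b \<in> D \<Longrightarrow> a + b \<in> D"
  and Ddiff: "a \<in> D \<Longrightarrow> b \<in> D \<Longrightarrow> a - b \<in> D"
  and Dmult: "a \<in> D \<Longrightarrow> b \<in> D \<Longrightarrow> a * b \<in> D"
  using D unfolding subring_def by auto

lemma Dpow: "a \<in> D \<Longrightarrow> a ^ n \<in> D"
  by (induction n) (auto intro: D1 Dmult)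

lemma Dsum: "(\<And>i. i \<in> A \<Longrightarrow> f i \<in> D) \<Longrightarrow> sum f A \<in> D"
  by (induction A rule: infinite_finite_induct) (auto intro: D0 Dadd)

lemma Dminus: "a \<in> D \<Longrightarrow> - a \<in> D"
  using Ddiff[OF D0] by simp

lemma lowD: assumes "\<And>j. j < m \<Longrightarrow> g $ j = 0" shows "g \<in> D"
proof -
  have "g = fps_X ^ m * fps_shift m g"
    apply (rule fps_conv_fps_X_power_mult_fps_shift)
    using assms subdegree_geI by blast
  hence "g = fps_const 0 + fps_X ^ m * fps_shift m g" by simp
  thus ?thesis using lower k0 by blast
qed

lemma lowD': assumes "\<And>j. j < Suc m \<Longrightarrow> g $ j = 0" shows "g \<in> D"
  using assms by (intro lowD) auto

lemma constD: "c \<in> k \<Longrightarrow> fps_const c \<in> D"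
  using lower by force

lemma lowD2: assumes "g $ 0 \<in> k" "\<And>j. 0 < j \<Longrightarrow> j < m \<Longrightarrow> g $ j = 0" shows "g \<in> D"
proof -
  have "g - fps_const (g $ 0) \<in> D"
    by (rule lowD) (use assms in \<open>auto\<close>)
  from Dadd[OF this constD[OF assms(1)]] show ?thesis by simp
qed

definition P where "P = CHAR('a) ^ Suc m"

lemma P: "m < P" "0 < P"
proof -
  have "CHAR('a) \<ge> 2" using chp prime_ge_2_nat by blast
  moreover have "Suc m < 2 ^ Suc m" by (rule less_exp)
  moreover have "(2::nat) ^ Suc m \<le> CHAR('a) ^ Suc m"
    using calculation(1) by (intro power_mono) auto
  ultimately have "Suc m < CHAR('a) ^ Suc m" by linarith
  thus "m < P" "0 < P" unfolding P_def using \<open>CHAR('a) \<ge> 2\<close> by auto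
qed

lemma frob: "(f + g :: 'a fps) ^ P = f ^ P + g ^ P"
proof -
  have "prime CHAR('a fps)" using chp by simp
  thus ?thesis by (rule freshmans_dream'[where n="Suc m"]) (simp add: P_def)
qed

lemma U: assumes "g $ 0 \<in> k" shows "g ^ P \<in> D"
proof -
  have g: "g = fps_const (g $ 0) + fps_X * fps_shift 1 g"
    by (rule fps_ext) (auto simp: fps_X_mult_nth)
  have "g ^ P = fps_const ((g $ 0) ^ P) + fps_X ^ P * (fps_shift 1 g) ^ P"
    by (subst g, subst frob) (simp add: power_mult_distrib fps_const_power)
  also have "\<dots> \<in> D"
    by (rule lowD2) (use P assms kpow in \<open>auto simp: fps_X_power_mult_nth\<close>)
  finally show ?thesis .
qed

lemma pow_root: assumes "root_extension k UNIV" shows "\<exists>n>0. g ^ n \<in> D"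
proof -
  obtain n where n: "n > 0" "(g $ 0) ^ n \<in> k" using assms unfolding root_extension_def by blast
  have "(g ^ n) ^ P \<in> D" by (rule U) (use n in \<open>simp add: fps_nth_power_0\<close>)
  thus ?thesis using n P by (intro exI[of _ "n * P"]) (simp add: power_mult)
qed

lemma pow_bdd: assumes "bounded_root_extension k UNIV" shows "\<exists>n>0. \<forall>g. g ^ n \<in> D"
proof -
  obtain n where n: "n > 0" "\<And>a. a ^ n \<in> k" using assms unfolding bounded_root_extension_def by blast
  have "\<And>g. (g ^ n) ^ P \<in> D" by (rule U) (use n in \<open>simp add: fps_nth_power_0\<close>)
  thus ?thesis using n P by (intro exI[of _ "n * P"]) (simp add: power_mult)
qed

lemma bdd_root: "bounded_root_extension R S \<Longrightarrow> root_extension R S"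
  unfolding bounded_root_extension_def root_extension_def by blast

lemma unitD: assumes ap: "\<And>g. \<exists>n>0. g ^ n \<in> D" and f: "f \<in> D" "f $ 0 \<noteq> 0"
  shows "inverse f \<in> D"
proof -
  obtain n where n: "n > 0" "(inverse f) ^ n \<in> D" using ap by blast
  have gf: "inverse f * f = 1" using f by (intro inverse_mult_eq_1)
  have "inverse f ^ n * f ^ (n - 1) = inverse f * (inverse f * f) ^ (n - 1)"
    using n(1) by (cases n) (auto simp: power_mult_distrib mult_ac)
  also have "\<dots> = inverse f" using gf by simp
  finally have "inverse f = inverse f ^ n * f ^ (n - 1)" by simp
  thus ?thesis using n f Dmult Dpow by metis
qed

lemma ideal_unit: assumes ap: "\<And>g. \<exists>n>0. g ^ n \<in> D" and J: "ideal_in D J" and f: "f \<in> J" "f $ 0 \<noteq> 0"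
  shows "J = D"
proof -
  have fD: "f \<in> D" using J f unfolding ideal_in_def by auto
  have "inverse f * f \<in> J" using J f unitD[OF ap fD f(2)] unfolding ideal_in_def by blast
  hence one: "1 \<in> J" using inverse_mult_eq_1[OF f(2)] by simp
  have "\<And>r. r \<in> D \<Longrightarrow> r \<in> J" using J one unfolding ideal_in_def by (metis mult_1_right)
  thus ?thesis using J unfolding ideal_in_def by blast
qed

lemma quasilocal: assumes ap: "\<And>g. \<exists>n>0. g ^ n \<in> D"
  shows "maximal_ideal_in D {f \<in> D. f $ 0 = 0}" and "quasilocal D"
proof -
  let ?M = "{f \<in> D. f $ 0 = 0}"
  have I: "ideal_in D ?M" unfolding ideal_in_def using D0 Dadd Dmult by auto
  have ne: "?M \<noteq> D"
  proof
    assume "?M = D"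
    hence "1 \<in> ?M" using D1 by simp
    thus False by simp
  qed
  have sub: "J \<subseteq> ?M" if "ideal_in D J" "J \<noteq> D" for J
    using ideal_unit[OF ap that(1)] that unfolding ideal_in_def by blast
  show mx: "maximal_ideal_in D ?M" unfolding maximal_ideal_in_def
    using I ne sub by blast
  show "quasilocal D" unfolding quasilocal_def
  proof (rule ex1I[of _ ?M])
    fix J assume J: "maximal_ideal_in D J"
    hence "J \<subseteq> ?M" using sub unfolding maximal_ideal_in_def by blast
    thus "J = ?M" using J I ne unfolding maximal_ideal_in_def by blast
  qed (rule mx)
qed

lemma AV: assumes ap: "\<And>g. \<exists>n>0. g ^ n \<in> D" shows "AV_domain D"
  unfolding AV_domain_def
proof (intro conjI D ballI)
  have *: "\<exists>n>0. dvd_in D (a ^ n) (b ^ n)" if ab: "a \<noteq> 0" "b \<noteq> 0" "subdegree a \<le> subdegree b" for a b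
  proof -
    have "a dvd b" using fps_dvd_iff[OF ab(1,2)] ab(3) by simp
    then obtain q where q: "b = a * q" by (elim dvdE)
    obtain n where n: "n > 0" "q ^ n \<in> D" using ap by blast
    have "b ^ n = a ^ n * q ^ n" using q by (simp add: power_mult_distrib)
    thus ?thesis using n unfolding dvd_in_def by blast
  qed
  fix a b assume "a \<in> D - {0}" "b \<in> D - {0}"
  thus "\<exists>n>0. dvd_in D (a ^ n) (b ^ n) \<or> dvd_in D (b ^ n) (a ^ n)"
    using *[of a b] *[of b a] by (cases "subdegree a \<le> subdegree b") auto
qed

lemma int_closure: assumes ap: "\<And>g. \<exists>n>0. g ^ n \<in> D"
  shows "integral_closure_fls D = range fps_to_fls"
proof
  show "range fps_to_fls \<subseteq> integral_closure_fls D"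
  proof
    fix x assume "x \<in> range (fps_to_fls :: 'a fps \<Rightarrow> _)"
    then obtain g where g: "x = fps_to_fls g" by blast
    have a: "fps_X ^ m * g \<in> D" by (rule lowD) (simp add: fps_X_power_mult_nth)
    have b: "fps_X ^ m \<in> D" by (rule lowD) (simp add: fps_X_power_nth)
    have "x = fps_to_fls (fps_X ^ m * g) / fps_to_fls (fps_X ^ m)"
      by (simp add: g fls_times_fps_to_fls)
    hence q: "x \<in> quot_field_fls D" unfolding quot_field_fls_def using a b by force
    obtain n where n: "n > 0" "g ^ n \<in> D" using ap by blast
    define c where "c = (\<lambda>i::nat. if i = 0 then - (g ^ n) else 0)"
    have "(\<Sum>i<n. fps_to_fls (c i) * x ^ i) = (\<Sum>i<n. if i = 0 then - (x ^ n) else 0)"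
      by (intro sum.cong) (auto simp: c_def g fps_to_fls_power)
    also have "\<dots> = - (x ^ n)" using n by simp
    finally have "x ^ n + (\<Sum>i<n. fps_to_fls (c i) * x ^ i) = 0" by simp
    moreover have "\<forall>i<n. c i \<in> D" using n D0 Dminus by (auto simp: c_def)
    ultimately have "integral_over_fls D x" unfolding integral_over_fls_def by blast
    thus "x \<in> integral_closure_fls D" using q unfolding integral_closure_fls_def by blast
  qed
next
  show "integral_closure_fls D \<subseteq> range fps_to_fls"
  proof
    fix x :: "'a fls" assume "x \<in> integral_closure_fls D"
    then obtain n c where nc: "x ^ n + (\<Sum>i<n. fps_to_fls (c i) * x ^ i) = 0"
      unfolding integral_closure_fls_def integral_over_fls_def by blast
    show "x \<in> range fps_to_fls"
    proof (cases "fls_subdegree x \<ge> 0")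
      case True
      hence "x = fps_to_fls (fls_regpart x)" by simp
      thus ?thesis by blast
    next
      case False
      let ?s = "fls_subdegree x"
      have x0: "x \<noteq> 0" using False by auto
      have "(\<Sum>i<n. fps_to_fls (c i) * x ^ i) $$ (int n * ?s) = 0"
      proof -
        have "(fps_to_fls (c i) * x ^ i) $$ (int n * ?s) = 0" if "i < n" for i
        proof (rule fls_times_nth_eq0)
          have "int n * ?s < int i * ?s" using that False by (intro mult_strict_right_mono_neg) auto
          thus "int n * ?s < fls_subdegree (fps_to_fls (c i)) + fls_subdegree (x ^ i)"
            using fls_subdegree_fls_to_fps_gt0[of "c i"] by (simp add: fls_subdegree_pow)
        qed
        thus ?thesis by (simp add: fls_nth_sum)
      qed
      moreover have "(x ^ n) $$ (int n * ?s) \<noteq> 0" using x0 by simp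
      ultimately have "(x ^ n + (\<Sum>i<n. fps_to_fls (c i) * x ^ i)) $$ (int n * ?s) \<noteq> 0" by simp
      thus ?thesis using nc by simp
    qed
  qed
qed

lemma D_ideal: "ideal_in D D"
  unfolding ideal_in_def using D0 Dadd Dmult by blast

lemma gi_mem: "x \<in> gen_ideal D A \<longleftrightarrow> (\<forall>I. ideal_in D I \<and> A \<subseteq> I \<longrightarrow> x \<in> I)"
  unfolding gen_ideal_def by blast

lemma gi_ideal: assumes "A \<subseteq> D" shows "ideal_in D (gen_ideal D A)"
proof -
  have DF: "ideal_in D D \<and> A \<subseteq> D" using assms D_ideal by blast
  show ?thesis unfolding ideal_in_def[of D "gen_ideal D A"]
  proof (intro conjI ballI)
    show "gen_ideal D A \<subseteq> D" using DF gi_mem by blast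
    show "0 \<in> gen_ideal D A" unfolding gi_mem ideal_in_def by blast
    show "x + y \<in> gen_ideal D A" if "x \<in> gen_ideal D A" "y \<in> gen_ideal D A" for x y
      using that unfolding gi_mem ideal_in_def by blast
    show "r * x \<in> gen_ideal D A" if "r \<in> D" "x \<in> gen_ideal D A" for r x
      using that unfolding gi_mem ideal_in_def by blast
  qed
qed

lemma gi_sup: "A \<subseteq> gen_ideal D A"
  unfolding gen_ideal_def by blast

lemma gi_least: "ideal_in D I \<Longrightarrow> A \<subseteq> I \<Longrightarrow> gen_ideal D A \<subseteq> I"
  unfolding gen_ideal_def by blast

lemma API_uniform: assumes "\<exists>n>0. \<forall>g. g ^ n \<in> D" shows "API_domain D"
  unfolding API_domain_def
proof (intro conjI D allI impI)
  fix S assume S: "S \<noteq> {} \<and> S \<subseteq> D - {0}"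
  obtain n where n: "n > 0" "\<And>g. g ^ n \<in> D" using assms by blast
  define r where "r = (LEAST r. \<exists>s\<in>S. subdegree s = r)"
  have "\<exists>s\<in>S. subdegree s = r" unfolding r_def
    by (rule LeastI_ex) (use S in blast)
  then obtain s0 where s0: "s0 \<in> S" "subdegree s0 = r" by blast
  have rle: "r \<le> subdegree s" if "s \<in> S" for s unfolding r_def
    by (rule Least_le) (use that in blast)
  have s0D: "s0 \<in> D" "s0 \<noteq> 0" using s0 S by auto
  let ?R = "{s0 ^ n * c | c. c \<in> D}"
  have RI: "ideal_in D ?R" unfolding ideal_in_def
  proof (intro conjI ballI)
    show "?R \<subseteq> D"
    proof
      fix x assume "x \<in> ?R"
      then obtain c where "x = s0 ^ n * c" "c \<in> D" by blast
      thus "x \<in> D" using s0D Dpow Dmult by simp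
    qed
    have "0 = s0 ^ n * 0" by simp
    thus "0 \<in> ?R" using D0 by blast
    show "x + y \<in> ?R" if xy: "x \<in> ?R" "y \<in> ?R" for x y
    proof -
      obtain c d where "x = s0 ^ n * c" "y = s0 ^ n * d" "c \<in> D" "d \<in> D" using xy by blast
      hence "x + y = s0 ^ n * (c + d)" "c + d \<in> D" using Dadd by (simp_all add: distrib_left)
      thus ?thesis by blast
    qed
    show "t * x \<in> ?R" if tx: "t \<in> D" "x \<in> ?R" for t x
    proof -
      obtain c where "x = s0 ^ n * c" "c \<in> D" using tx by blast
      hence "t * x = s0 ^ n * (t * c)" "t * c \<in> D" using Dmult tx(1) by (simp_all add: mult_ac)
      thus ?thesis by blast
    qed
  qed
  have sub: "(\<lambda>d. d ^ n) ` S \<subseteq> ?R"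
  proof
    fix x assume "x \<in> (\<lambda>d. d ^ n) ` S"
    then obtain s where s: "s \<in> S" "x = s ^ n" by blast
    have "s \<noteq> 0" using s S by auto
    hence "s0 dvd s" using fps_dvd_iff[OF s0D(2)] rle[OF s(1)] s0(2) by simp
    then obtain q where "s = s0 * q" by (elim dvdE)
    hence "x = s0 ^ n * q ^ n" using s by (simp add: power_mult_distrib)
    thus "x \<in> ?R" using n(2)[of q] by blast
  qed
  have SD: "(\<lambda>d. d ^ n) ` S \<subseteq> D"
  proof
    fix x assume "x \<in> (\<lambda>d. d ^ n) ` S"
    then obtain s where "s \<in> S" "x = s ^ n" by blast
    thus "x \<in> D" using S Dpow by blast
  qed
  have GI: "ideal_in D (gen_ideal D ((\<lambda>d. d ^ n) ` S))" by (rule gi_ideal[OF SD])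
  have e: "gen_ideal D ((\<lambda>d. d ^ n) ` S) = ?R"
  proof (rule equalityI)
    show "gen_ideal D ((\<lambda>d. d ^ n) ` S) \<subseteq> ?R" by (rule gi_least[OF RI sub])
    show "?R \<subseteq> gen_ideal D ((\<lambda>d. d ^ n) ` S)"
    proof
      fix x assume "x \<in> ?R"
      then obtain c where c: "x = s0 ^ n * c" "c \<in> D" by blast
      have "s0 ^ n \<in> (\<lambda>d. d ^ n) ` S" using s0(1) by (rule imageI)
      hence s0I: "s0 ^ n \<in> gen_ideal D ((\<lambda>d. d ^ n) ` S)" using gi_sup[of "(\<lambda>d. d ^ n) ` S"] by (rule subsetD[rotated])
      have "c * s0 ^ n \<in> gen_ideal D ((\<lambda>d. d ^ n) ` S)"
        using GI c(2) s0I unfolding ideal_in_def by blast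
      moreover have "x = c * s0 ^ n" using c(1) by (simp add: mult.commute)
      ultimately show "x \<in> gen_ideal D ((\<lambda>d. d ^ n) ` S)" by simp
    qed
  qed
  have "s0 ^ n \<in> D" using s0D Dpow by blast
  hence "principal_in D (gen_ideal D ((\<lambda>d. d ^ n) ` S))"
    unfolding principal_in_def e by (rule bexI[rotated]) (rule refl)
  thus "\<exists>n>0. principal_in D (gen_ideal D ((\<lambda>d. d ^ n) ` S))" using n(1) by (intro exI[of _ n]) simp
qed

lemma k0_bdd_uniform: assumes ap: "\<And>g. \<exists>n>0. g ^ n \<in> D"
  and b: "bounded_root_extension ((\<lambda>f. f $ 0) ` D) UNIV"
  shows "\<exists>n>0. \<forall>g. g ^ n \<in> D"
proof -
  obtain N where N: "N > 0" "\<And>a. a ^ N \<in> (\<lambda>f. f $ 0) ` D"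
    using b unfolding bounded_root_extension_def by blast
  have "g ^ (N * P) \<in> D" for g
  proof -
    obtain f where f: "f \<in> D" "f $ 0 = (g $ 0) ^ N" using N(2)[of "g $ 0"] by force
    show ?thesis
    proof (cases "f $ 0 = 0")
      case True
      have "(g ^ N) ^ P \<in> D" by (rule U) (use True f k0 N(1) in \<open>simp add: fps_nth_power_0 power_0_left\<close>)
      thus ?thesis by (simp add: power_mult)
    next
      case False
      have h: "inverse f \<in> D" by (rule unitD[OF ap f(1) False])
      have "(g ^ N * inverse f) ^ P \<in> D"
        by (rule U) (use False f k0 in \<open>simp add: fps_nth_power_0\<close>)
      moreover have "g ^ (N * P) = (g ^ N * inverse f) ^ P * f ^ P"
      proof -
        have "(g ^ N * inverse f) ^ P * f ^ P = (g ^ N) ^ P * (inverse f * f) ^ P"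
          by (simp add: power_mult_distrib mult_ac)
        also have "\<dots> = g ^ (N * P)" using inverse_mult_eq_1[OF False] by (simp add: power_mult)
        finally show ?thesis by simp
      qed
      ultimately show ?thesis using Dmult Dpow f(1) by metis
    qed
  qed
  thus ?thesis using N P by (intro exI[of _ "N * P"]) auto
qed

lemma API_k0: assumes ap: "\<And>g. \<exists>n>0. g ^ n \<in> D" and A: "API_domain D"
  shows "bounded_root_extension ((\<lambda>f. f $ 0) ` D) UNIV"
proof -
  let ?S = "{fps_const a * fps_X ^ m | a::'a. a \<noteq> 0}"
  have SD: "?S \<subseteq> D - {0}"
  proof
    fix x assume "x \<in> ?S"
    then obtain a where a: "a \<noteq> 0" "x = fps_const a * fps_X ^ m" by blast
    have "x \<in> D" by (rule lowD) (simp add: a fps_X_power_mult_right_nth)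
    thus "x \<in> D - {0}" using a by simp
  qed
  have "fps_const 1 * fps_X ^ m \<in> ?S" by (intro CollectI exI[of _ 1]) simp
  hence "?S \<noteq> {}" by blast
  moreover have "\<forall>S. S \<noteq> {} \<and> S \<subseteq> D - {0} \<longrightarrow> (\<exists>n>0. principal_in D (gen_ideal D ((\<lambda>d. d ^ n) ` S)))"
    using A unfolding API_domain_def by (elim conjE)
  ultimately have "\<exists>n>0. principal_in D (gen_ideal D ((\<lambda>d. d ^ n) ` ?S))"
    using SD by (elim allE[of _ ?S]) simp
  then obtain n where n1: "n > 0" and pr: "principal_in D (gen_ideal D ((\<lambda>d. d ^ n) ` ?S))" by blast
  from pr obtain g where n2: "g \<in> D" and gI: "gen_ideal D ((\<lambda>d. d ^ n) ` ?S) = {g * c | c. c \<in> D}"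
    unfolding principal_in_def by blast
  note n = n1 n2
  let ?T = "{f \<in> D. \<forall>j<m * n. f $ j = 0}"
  have TI: "ideal_in D ?T" unfolding ideal_in_def
  proof (intro conjI ballI)
    show "?T \<subseteq> D" by blast
    show "0 \<in> ?T" using D0 by simp
    show "x + y \<in> ?T" if "x \<in> ?T" "y \<in> ?T" for x y using that Dadd by auto
    show "r * x \<in> ?T" if "r \<in> D" "x \<in> ?T" for r x
    proof -
      have xz: "\<forall>j<m * n. x $ j = 0" using that by blast
      have "(r * x) $ j = 0" if "j < m * n" for j
        unfolding fps_mult_nth using xz that by (intro sum.neutral) auto
      thus ?thesis using that Dmult by auto
    qed
  qed
  have ST: "(\<lambda>d. d ^ n) ` ?S \<subseteq> ?T"
  proof
    fix x assume "x \<in> (\<lambda>d. d ^ n) ` ?S"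
    then obtain a where a: "a \<noteq> 0" "x = (fps_const a * fps_X ^ m) ^ n" by blast
    hence x: "x = fps_const (a ^ n) * fps_X ^ (m * n)"
      by (simp add: power_mult_distrib fps_const_power power_mult)
    have "fps_const a * fps_X ^ m \<in> ?S" using a(1) by blast
    hence "x \<in> D" unfolding a(2) using SD Dpow by blast
    thus "x \<in> ?T" using x by (simp add: fps_X_power_mult_right_nth)
  qed
  have "g * 1 \<in> {g * c | c. c \<in> D}" using D1 by blast
  hence "g \<in> gen_ideal D ((\<lambda>d. d ^ n) ` ?S)" unfolding gI by simp
  hence gT: "g \<in> ?T" using gi_least[OF TI ST] by blast
  have cfac: "\<exists>c\<in>D. fps_const (a ^ n) * fps_X ^ (m * n) = g * c" if "a \<noteq> 0" for a
  proof -
    have "fps_const a * fps_X ^ m \<in> ?S" using that by blast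
    hence "(fps_const a * fps_X ^ m) ^ n \<in> (\<lambda>d. d ^ n) ` ?S" by (rule imageI)
    hence "(fps_const a * fps_X ^ m) ^ n \<in> gen_ideal D ((\<lambda>d. d ^ n) ` ?S)"
      using gi_sup[of "(\<lambda>d. d ^ n) ` ?S"] by (rule subsetD[rotated])
    moreover have "(fps_const a * fps_X ^ m) ^ n = fps_const (a ^ n) * fps_X ^ (m * n)"
      by (simp add: power_mult_distrib fps_const_power power_mult)
    ultimately have "fps_const (a ^ n) * fps_X ^ (m * n) \<in> {g * c | c. c \<in> D}" using gI by simp
    thus ?thesis by blast
  qed
  define g' where "g' = fps_shift (m * n) g"
  have gg: "g = fps_X ^ (m * n) * g'" unfolding g'_def
  proof (rule fps_conv_fps_X_power_mult_fps_shift)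
    have "\<forall>j<m * n. g $ j = 0" using gT by blast
    thus "g = 0 \<or> m * n \<le> subdegree g" using subdegree_geI[of g "m * n"] by blast
  qed
  have coeff: "a ^ n = g' $ 0 * c $ 0" if "c \<in> D" "fps_const (a ^ n) * fps_X ^ (m * n) = g * c" for a c
  proof -
    have "fps_X ^ (m * n) * fps_const (a ^ n) = fps_X ^ (m * n) * (g' * c)"
      using that(2) gg by (simp add: mult_ac)
    hence "fps_const (a ^ n) = g' * c" by simp
    hence "fps_const (a ^ n) $ 0 = (g' * c) $ 0" by simp
    thus ?thesis by simp
  qed
  obtain c1 where c1: "c1 \<in> D" "fps_const (1 ^ n) * fps_X ^ (m * n) = g * c1" using cfac[of 1] by auto
  have c10: "1 = g' $ 0 * c1 $ 0" using coeff[OF c1] by simp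
  hence c1nz: "c1 $ 0 \<noteq> 0" by auto
  have ic1: "inverse c1 \<in> D" by (rule unitD[OF ap c1(1) c1nz])
  have "a ^ n \<in> (\<lambda>f. f $ 0) ` D" for a
  proof (cases "a = 0")
    case True
    have "a ^ n = (0::'a fps) $ 0" using True n(1) by simp
    thus ?thesis using D0 by (rule image_eqI)
  next
    case False
    obtain c where c: "c \<in> D" "fps_const (a ^ n) * fps_X ^ (m * n) = g * c" using cfac[OF False] by blast
    have "a ^ n = g' $ 0 * c $ 0" using coeff[OF c] .
    also have "g' $ 0 = inverse (c1 $ 0)"
    proof -
      have "c1 $ 0 * g' $ 0 = 1" using c10 by (simp add: mult.commute)
      from inverse_unique[OF this] show ?thesis by simp
    qed
    finally have "a ^ n = (c * inverse c1) $ 0" by (simp add: mult.commute)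
    thus ?thesis using Dmult[OF c(1) ic1] by blast
  qed
  thus ?thesis unfolding bounded_root_extension_def using n(1) by (intro conjI exI[of _ n]) auto
qed


lemma ideal_sum: "ideal_in D J \<Longrightarrow> (\<And>i. i \<in> A \<Longrightarrow> f i \<in> J) \<Longrightarrow> sum f A \<in> J"
  unfolding ideal_in_def by (induction A rule: infinite_finite_induct) auto

lemma gen_eq: "ideal_in D I \<Longrightarrow> A \<subseteq> I \<Longrightarrow> I \<subseteq> gen_ideal D A \<Longrightarrow> I = gen_ideal D A"
  using gi_least by blast

lemma cutoff_add: "fps_cutoff n (f + g :: 'a fps) = fps_cutoff n f + fps_cutoff n g"
  by (rule fps_ext) simp

lemma cutoff_const: "fps_cutoff n (fps_const (c::'a) * f) = fps_const c * fps_cutoff n f"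
  by (rule fps_ext) simp

lemma cutoff_sum: "fps_cutoff n (sum f A :: 'a fps) = (\<Sum>i\<in>A. fps_cutoff n (f i))"
  by (rule fps_ext) (simp add: fps_sum_nth)

lemma cutoff_diff: "fps_cutoff n (f - g :: 'a fps) = fps_cutoff n f - fps_cutoff n g"
  by (rule fps_ext) simp

lemma noetherian: assumes fd: "finite_degree k" shows "noetherian_in D"
  unfolding noetherian_in_def
proof (intro allI impI)
  fix I assume I: "ideal_in D I"
  have ID: "I \<subseteq> D" and I0: "0 \<in> I" and Iadd: "\<And>x y. x \<in> I \<Longrightarrow> y \<in> I \<Longrightarrow> x + y \<in> I"
    and Imul: "\<And>r x. r \<in> D \<Longrightarrow> x \<in> I \<Longrightarrow> r * x \<in> I" using I unfolding ideal_in_def by auto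
  show "\<exists>A. finite A \<and> A \<subseteq> I \<and> I = gen_ideal D A"
  proof (cases "I \<subseteq> {0}")
    case True
    have "I \<subseteq> gen_ideal D {}" using True gi_ideal[of "{}"] unfolding ideal_in_def by auto
    thus ?thesis using gen_eq[OF I] by blast
  next
    case False
    define r where "r = (LEAST r. \<exists>f\<in>I. f \<noteq> 0 \<and> subdegree f = r)"
    obtain f1 where f1: "f1 \<in> I" "f1 \<noteq> 0" using False by blast
    have "\<exists>f\<in>I. f \<noteq> 0 \<and> subdegree f = r" unfolding r_def
      by (rule LeastI_ex) (use f1 in blast)
    then obtain f0 where f0: "f0 \<in> I" "f0 \<noteq> 0" "subdegree f0 = r" by blast
    have rle: "r \<le> subdegree f" if "f \<in> I" "f \<noteq> 0" for f unfolding r_def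
      by (rule Least_le) (use that in blast)
    define N where "N = r + Suc m"
    have tail: "h \<in> I" if h: "\<And>j. j < N \<Longrightarrow> h $ j = 0" for h
    proof (cases "h = 0")
      case True thus ?thesis using I0 by simp
    next
      case False
      have sh: "subdegree h \<ge> N" using subdegree_geI[OF False, of N] h by simp
      hence "f0 dvd h" using fps_dvd_iff[OF f0(2) False] f0(3) unfolding N_def by simp
      then obtain q where q: "h = f0 * q" by (elim dvdE)
      have q0: "q \<noteq> 0" using q False by auto
      have "subdegree h = subdegree f0 + subdegree q" using q q0 f0(2) by simp
      hence sq: "subdegree q \<ge> Suc m" using sh f0(3) unfolding N_def by simp
      have "q \<in> D"
      proof (rule lowD')
        fix j assume "j < Suc m"
        thus "q $ j = 0" using sq by (intro nth_less_subdegree_zero) simp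
      qed
      hence "q * f0 \<in> I" using Imul f0(1) by blast
      thus ?thesis using q by (simp add: mult.commute)
    qed
    define T where "T = N + Suc m"
    obtain B :: "'a set" where B: "finite B" "\<And>x. \<exists>c. (\<forall>b\<in>B. c b \<in> k) \<and> x = (\<Sum>b\<in>B. c b * b)"
      using fd unfolding finite_degree_def by blast
    define cf where "cf x = (SOME c. (\<forall>b\<in>B. c b \<in> k) \<and> x = (\<Sum>b\<in>B. c b * b))" for x
    have cf: "(\<forall>b\<in>B. cf x b \<in> k) \<and> x = (\<Sum>b\<in>B. cf x b * b)" for x
      using B(2)[of x] unfolding cf_def by (rule someI_ex)
    let ?Sc = "fps_const ` k"
    have Sc: "subring ?Sc" unfolding subring_def
    proof (intro conjI ballI)
      show "0 \<in> ?Sc" using k0 by (intro image_eqI[of _ _ 0]) auto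
      show "1 \<in> ?Sc" using k0 by (intro image_eqI[of _ _ 1]) auto
      fix x y assume "x \<in> ?Sc" "y \<in> ?Sc"
      then obtain a b where ab: "a \<in> k" "b \<in> k" "x = fps_const a" "y = fps_const b" by blast
      show "x + y \<in> ?Sc" using ab kadd by (intro image_eqI[of _ _ "a + b"]) auto
      show "x - y \<in> ?Sc" using ab kdiff by (intro image_eqI[of _ _ "a - b"]) auto
      show "x * y \<in> ?Sc" using ab kmult by (intro image_eqI[of _ _ "a * b"]) auto
    qed
    have Sinv: "\<exists>c'\<in>?Sc. c' * c = 1" if cc: "c \<in> ?Sc" "c \<noteq> 0" for c
    proof -
      obtain a where a: "a \<in> k" "c = fps_const a" using cc by blast
      have "a \<noteq> 0" using a cc by auto
      hence "fps_const (inverse a) * c = 1" using a by (simp flip: fps_const_mult)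
      thus ?thesis using a kinv by blast
    qed
    let ?V = "fps_cutoff T ` I"
    have Vsub: "lsubspace ?Sc ?V" unfolding lsubspace_def
    proof (intro conjI ballI)
      show "0 \<in> ?V" using I0 by (intro image_eqI[of _ _ 0]) auto
      fix x y assume "x \<in> ?V" "y \<in> ?V"
      then obtain f g where "f \<in> I" "g \<in> I" "x = fps_cutoff T f" "y = fps_cutoff T g" by blast
      thus "x + y \<in> ?V" using Iadd by (intro image_eqI[of _ _ "f + g"]) (auto simp: cutoff_add)
    next
      fix c x assume "c \<in> ?Sc" "x \<in> ?V"
      then obtain a f where "a \<in> k" "c = fps_const a" "f \<in> I" "x = fps_cutoff T f" by blast
      thus "c * x \<in> ?V" using Imul constD by (intro image_eqI[of _ _ "fps_const a * f"]) (auto simp: cutoff_const)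
    qed
    let ?J = "{..<T} \<times> B"
    let ?g = "\<lambda>(j, b). fps_const b * fps_X ^ j"
    have VJ: "?V \<subseteq> lspan ?Sc ?g ?J"
    proof
      fix x assume "x \<in> ?V"
      then obtain f where f: "f \<in> I" "x = fps_cutoff T f" by blast
      let ?c = "\<lambda>(j, b). fps_const (cf (f $ j) b)"
      have "x = (\<Sum>p\<in>?J. ?c p * ?g p)"
      proof (rule fps_ext)
        fix n
        have "(\<Sum>p\<in>?J. ?c p * ?g p) $ n = (\<Sum>p\<in>?J. (?c p * ?g p) $ n)"
          by (simp add: fps_sum_nth)
        also have "\<dots> = (\<Sum>(j, b)\<in>?J. cf (f $ j) b * b * (if n = j then 1 else 0))"
          by (intro sum.cong refl) (auto simp: fps_X_power_nth split: prod.splits)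
        also have "\<dots> = (\<Sum>j<T. \<Sum>b\<in>B. cf (f $ j) b * b * (if n = j then 1 else 0))"
          by (rule sum.cartesian_product[symmetric])
        also have "\<dots> = (\<Sum>j<T. if n = j then (\<Sum>b\<in>B. cf (f $ j) b * b) else 0)"
          by (intro sum.cong refl) auto
        also have "\<dots> = (\<Sum>j<T. if n = j then f $ j else 0)"
          using cf by (intro sum.cong refl) auto
        also have "\<dots> = x $ n" using f(2) by (simp add: sum.delta)
        finally show "x $ n = (\<Sum>p\<in>?J. ?c p * ?g p) $ n" by simp
      qed
      moreover have "\<forall>p\<in>?J. ?c p \<in> ?Sc" using cf by auto
      ultimately show "x \<in> lspan ?Sc ?g ?J" unfolding lspan_def by blast
    qed
    obtain A where A: "finite A" "A \<subseteq> ?V" "?V \<subseteq> lspan ?Sc id A"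
      using fin_sub[OF Sc Sinv, of ?J ?V ?g] VJ Vsub B(1) by blast
    define fa where "fa a = (SOME f. f \<in> I \<and> fps_cutoff T f = a)" for a
    have fa: "fa a \<in> I \<and> fps_cutoff T (fa a) = a" if "a \<in> A" for a
    proof -
      have "\<exists>f. f \<in> I \<and> fps_cutoff T f = a" using that A(2) by blast
      thus ?thesis unfolding fa_def by (rule someI_ex)
    qed
    let ?G = "insert (fps_X ^ N) (fa ` A)"
    have XN: "fps_X ^ N \<in> I" by (rule tail) (simp add: fps_X_power_nth)
    have GI: "?G \<subseteq> I" using XN fa by blast
    have GD: "?G \<subseteq> D" using GI ID by blast
    have gI: "ideal_in D (gen_ideal D ?G)" by (rule gi_ideal[OF GD])
    have gsup: "?G \<subseteq> gen_ideal D ?G" by (rule gi_sup)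
    have gmul: "\<And>r x. r \<in> D \<Longrightarrow> x \<in> gen_ideal D ?G \<Longrightarrow> r * x \<in> gen_ideal D ?G"
      and gadd: "\<And>x y. x \<in> gen_ideal D ?G \<Longrightarrow> y \<in> gen_ideal D ?G \<Longrightarrow> x + y \<in> gen_ideal D ?G"
      using gI unfolding ideal_in_def by auto
    have "I \<subseteq> gen_ideal D ?G"
    proof
      fix f assume f: "f \<in> I"
      have "fps_cutoff T f \<in> lspan ?Sc id A" using A(3) f by blast
      then obtain e where e: "\<forall>a\<in>A. e a \<in> ?Sc" "fps_cutoff T f = (\<Sum>a\<in>A. e a * id a)"
        unfolding lspan_def by blast
      define ec where "ec a = (SOME c. c \<in> k \<and> e a = fps_const c)" for a
      have ec: "ec a \<in> k \<and> e a = fps_const (ec a)" if "a \<in> A" for a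
      proof -
        have "\<exists>c. c \<in> k \<and> e a = fps_const c" using e(1) that by blast
        thus ?thesis unfolding ec_def by (rule someI_ex)
      qed
      define u where "u = f - (\<Sum>a\<in>A. e a * fa a)"
      have "fps_cutoff T u = fps_cutoff T f - (\<Sum>a\<in>A. fps_cutoff T (e a * fa a))"
        unfolding u_def by (simp add: cutoff_diff cutoff_sum)
      also have "(\<Sum>a\<in>A. fps_cutoff T (e a * fa a)) = (\<Sum>a\<in>A. e a * id a)"
      proof (intro sum.cong refl)
        fix a assume a: "a \<in> A"
        show "fps_cutoff T (e a * fa a) = e a * id a"
          using ec[OF a] fa[OF a] by (simp add: cutoff_const)
      qed
      finally have cu: "fps_cutoff T u = 0" using e(2) by simp
      have uz: "u $ j = 0" if "j < T" for j
      proof -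
        have "fps_cutoff T u $ j = 0" using cu by simp
        thus ?thesis using that by simp
      qed
      define d where "d = fps_shift N u"
      have ud: "u = fps_X ^ N * d" unfolding d_def
        by (rule fps_ext) (auto simp: fps_X_power_mult_nth uz T_def)
      have dD: "d \<in> D" by (rule lowD') (simp add: d_def uz T_def)
      have "fps_X ^ N \<in> gen_ideal D ?G" using gsup by (rule subsetD) simp
      hence "d * fps_X ^ N \<in> gen_ideal D ?G" by (rule gmul[OF dD])
      moreover have "(\<Sum>a\<in>A. e a * fa a) \<in> gen_ideal D ?G"
      proof (rule ideal_sum[OF gI])
        fix a assume a: "a \<in> A"
        have "fa a \<in> ?G" using a by blast
        hence "fa a \<in> gen_ideal D ?G" using gsup by (rule subsetD[rotated])
        moreover have "e a \<in> D" using ec[OF a] constD by simp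
        ultimately show "e a * fa a \<in> gen_ideal D ?G" using gmul by simp
      qed
      ultimately have "(\<Sum>a\<in>A. e a * fa a) + d * fps_X ^ N \<in> gen_ideal D ?G" by (rule gadd[rotated])
      moreover have "f = (\<Sum>a\<in>A. e a * fa a) + d * fps_X ^ N"
        using ud unfolding u_def by (simp add: algebra_simps)
      ultimately show "f \<in> gen_ideal D ?G" by simp
    qed
    hence "I = gen_ideal D ?G" by (rule gen_eq[OF I GI])
    moreover have "finite ?G" using A(1) by simp
    ultimately show ?thesis using GI by (intro exI[of _ ?G]) simp
  qed
qed


lemma T_ideal: "ideal_in D {f \<in> D. \<forall>j<t. f $ j = 0}"
  unfolding ideal_in_def
proof (intro conjI ballI)
  show "{f \<in> D. \<forall>j<t. f $ j = 0} \<subseteq> D" by blast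
  show "0 \<in> {f \<in> D. \<forall>j<t. f $ j = 0}" using D0 by simp
  show "x + y \<in> {f \<in> D. \<forall>j<t. f $ j = 0}" if "x \<in> {f \<in> D. \<forall>j<t. f $ j = 0}" "y \<in> {f \<in> D. \<forall>j<t. f $ j = 0}" for x y
    using that Dadd by simp
  show "r * x \<in> {f \<in> D. \<forall>j<t. f $ j = 0}" if rx: "r \<in> D" "x \<in> {f \<in> D. \<forall>j<t. f $ j = 0}" for r x
  proof -
    have xz: "\<forall>j<t. x $ j = 0" using rx by simp
    have "(r * x) $ j = 0" if "j < t" for j
      unfolding fps_mult_nth using xz that by (intro sum.neutral) auto
    thus ?thesis using rx Dmult by simp
  qed
qed

lemma pow_ideal: "ideal_in D (ideal_pow D {f \<in> D. f $ 0 = 0} n)"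
proof (induction n)
  case 0 thus ?case using D_ideal by simp
next
  case (Suc n)
  have "{x * y | x y. x \<in> ideal_pow D {f \<in> D. f $ 0 = 0} n \<and> y \<in> {f \<in> D. f $ 0 = 0}} \<subseteq> D"
  proof
    fix z assume "z \<in> {x * y | x y. x \<in> ideal_pow D {f \<in> D. f $ 0 = 0} n \<and> y \<in> {f \<in> D. f $ 0 = 0}}"
    then obtain x y where "z = x * y" "x \<in> ideal_pow D {f \<in> D. f $ 0 = 0} n" "y \<in> D" by blast
    moreover have "ideal_pow D {f \<in> D. f $ 0 = 0} n \<subseteq> D" using Suc.IH unfolding ideal_in_def by blast
    ultimately show "z \<in> D" using Dmult by blast
  qed
  thus ?case by (simp add: gi_ideal)
qed

lemma pow_sub: "ideal_pow D {f \<in> D. f $ 0 = 0} n \<subseteq> {f \<in> D. \<forall>j<n. f $ j = 0}"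
proof (induction n)
  case 0 thus ?case by simp
next
  case (Suc n)
  have "{x * y | x y. x \<in> ideal_pow D {f \<in> D. f $ 0 = 0} n \<and> y \<in> {f \<in> D. f $ 0 = 0}} \<subseteq> {f \<in> D. \<forall>j<Suc n. f $ j = 0}"
  proof
    fix z assume "z \<in> {x * y | x y. x \<in> ideal_pow D {f \<in> D. f $ 0 = 0} n \<and> y \<in> {f \<in> D. f $ 0 = 0}}"
    then obtain x y where xy: "z = x * y" "x \<in> ideal_pow D {f \<in> D. f $ 0 = 0} n" "y \<in> D" "y $ 0 = 0" by blast
    have x: "x \<in> D" "\<forall>j<n. x $ j = 0" using xy(2) Suc.IH by blast+
    have "z $ j = 0" if "j < Suc n" for j
      unfolding xy(1) fps_mult_nth
    proof (intro sum.neutral ballI)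
      fix i assume i: "i \<in> {0..j}"
      show "x $ i * y $ (j - i) = 0"
      proof (cases "i < n")
        case True thus ?thesis using x by simp
      next
        case False
        hence "i = j" using i that by auto
        thus ?thesis using xy(4) by simp
      qed
    qed
    thus "z \<in> {f \<in> D. \<forall>j<Suc n. f $ j = 0}" using xy x Dmult by simp
  qed
  thus ?case by (simp add: gi_least[OF T_ideal])
qed

lemma pow_sup: "(\<forall>j<Suc m * Suc n. f $ j = 0) \<Longrightarrow> f \<in> ideal_pow D {f \<in> D. f $ 0 = 0} n"
proof (induction n arbitrary: f)
  case 0 thus ?case using lowD' by simp
next
  case (Suc n)
  define f' where "f' = fps_shift (Suc m) f"
  have "f = 0 \<or> Suc m \<le> subdegree f"
  proof (cases "f = 0")
    case False
    have z: "f $ j = 0" if "j < Suc m" for j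
    proof -
      have "Suc m \<le> Suc m * Suc (Suc n)" by simp
      thus ?thesis using that Suc.prems by (meson less_le_trans)
    qed
    thus ?thesis using subdegree_geI[OF False, of "Suc m"] by blast
  qed simp
  hence "f = fps_X ^ Suc m * f'" unfolding f'_def by (rule fps_conv_fps_X_power_mult_fps_shift)
  hence ff: "f = f' * fps_X ^ Suc m" by (simp add: mult.commute)
  have "\<forall>j<Suc m * Suc n. f' $ j = 0"
  proof (intro allI impI)
    fix j assume "j < Suc m * Suc n"
    hence "j + Suc m < Suc m * Suc (Suc n)" by simp
    thus "f' $ j = 0" using Suc.prems unfolding f'_def by simp
  qed
  hence f'I: "f' \<in> ideal_pow D {f \<in> D. f $ 0 = 0} n" by (rule Suc.IH)
  have "fps_X ^ Suc m \<in> D" by (rule lowD') (auto simp: fps_X_power_nth)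
  hence XM: "fps_X ^ Suc m \<in> {f \<in> D. f $ 0 = 0}" by simp
  have "f \<in> {x * y | x y. x \<in> ideal_pow D {f \<in> D. f $ 0 = 0} n \<and> y \<in> {f \<in> D. f $ 0 = 0}}"
    using ff f'I XM by (intro CollectI exI[of _ f'] exI[of _ "fps_X ^ Suc m"]) simp
  thus ?case using gi_sup[of "{x * y | x y. x \<in> ideal_pow D {f \<in> D. f $ 0 = 0} n \<and> y \<in> {f \<in> D. f $ 0 = 0}}"]
    by (simp only: ideal_pow.simps) (rule subsetD)
qed

lemma adic: "adic_complete D {f \<in> D. f $ 0 = 0}"
  unfolding adic_complete_def
proof (intro conjI allI impI)
  let ?P = "ideal_pow D {f \<in> D. f $ 0 = 0}"
  show "(\<Inter>n. ?P n) = {0}"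
  proof
    have "0 \<in> ?P n" for n using pow_ideal[of n] unfolding ideal_in_def by (elim conjE)
    thus "{0} \<subseteq> (\<Inter>n. ?P n)" by simp
    show "(\<Inter>n. ?P n) \<subseteq> {0}"
    proof
      fix f assume f: "f \<in> (\<Inter>n. ?P n)"
      have "f $ j = 0" for j
      proof -
        have "f \<in> ?P (Suc j)" using f by (rule INT_D) simp
        hence "f \<in> {f \<in> D. \<forall>i<Suc j. f $ i = 0}" using pow_sub[of "Suc j"] by (rule subsetD[rotated])
        thus ?thesis by simp
      qed
      thus "f \<in> {0}" by (simp add: fps_ext)
    qed
  qed
next
  let ?P = "ideal_pow D {f \<in> D. f $ 0 = 0}"
  fix f :: "nat \<Rightarrow> 'a fps"
  assume a: "(\<forall>i. f i \<in> D) \<and> (\<forall>n. \<exists>N. \<forall>i\<ge>N. \<forall>j\<ge>N. f i - f j \<in> ?P n)"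
  define Nn where "Nn n = (SOME N. \<forall>i\<ge>N. \<forall>j\<ge>N. f i - f j \<in> ?P n)" for n
  have Nn: "\<forall>i\<ge>Nn n. \<forall>j\<ge>Nn n. f i - f j \<in> ?P n" for n
  proof -
    have "\<exists>N. \<forall>i\<ge>N. \<forall>j\<ge>N. f i - f j \<in> ?P n" using a by (elim conjE) (rule spec)
    thus ?thesis unfolding Nn_def by (rule someI_ex)
  qed
  define L where "L = Abs_fps (\<lambda>j. f (Nn (Suc j)) $ j)"
  have agree: "f i $ j = L $ j" if "i \<ge> Nn (Suc j)" for i j
  proof -
    have "f i - f (Nn (Suc j)) \<in> ?P (Suc j)" using Nn[of "Suc j"] that by simp
    hence "f i - f (Nn (Suc j)) \<in> {f \<in> D. \<forall>i<Suc j. f $ i = 0}" using pow_sub[of "Suc j"] by (rule subsetD[rotated])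
    hence "(f i - f (Nn (Suc j))) $ j = 0" by simp
    thus ?thesis unfolding L_def by simp
  qed
  define Bd where "Bd c = (\<Sum>j<c. Nn (Suc j))" for c
  have Bd: "Nn (Suc j) \<le> Bd c" if "j < c" for j c
    unfolding Bd_def by (rule member_le_sum) (use that in auto)
  have close: "(f i - L) $ j = 0" if "i \<ge> Bd c" "j < c" for i j c
    using agree[of j i] Bd[OF that(2)] that(1) by simp
  have LD: "L \<in> D"
  proof -
    have a1: "f (Bd (Suc m)) - L \<in> D" by (rule lowD') (use close in auto)
    have a2: "f (Bd (Suc m)) \<in> D" using a by simp
    from Ddiff[OF a2 a1] show ?thesis by simp
  qed
  have "\<forall>n. \<exists>N. \<forall>i\<ge>N. f i - L \<in> ?P n"
  proof
    fix n
    have "f i - L \<in> ?P n" if "i \<ge> Bd (Suc m * Suc n)" for i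
      by (rule pow_sup) (use close that in auto)
    thus "\<exists>N. \<forall>i\<ge>N. f i - L \<in> ?P n" by (intro exI[of _ "Bd (Suc m * Suc n)"]) simp
  qed
  thus "\<exists>L\<in>D. \<forall>n. \<exists>N. \<forall>i\<ge>N. f i - L \<in> ?P n" using LD by (intro bexI[of _ L])
qed

end

theorem theorem7:
  fixes k :: "'a::field set" and p m :: nat and D :: "'a fps set"
  assumes k: "subfield k"
    and p: "CHAR('a) = p" "p > 0"
    and D: "subring D"
    and lower: "{fps_const c + fps_X ^ m * f | c f. c \<in> k} \<subseteq> D"
  defines "M \<equiv> {f \<in> D. fps_nth f 0 = 0}"
    and "k0 \<equiv> (\<lambda>f. fps_nth f 0) ` D"
  shows
    "(root_extension k UNIV \<longrightarrow>
        quasilocal D \<and> AV_domain D \<and> integral_closure_fls D = range fps_to_fls)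
   \<and> (bounded_root_extension k UNIV \<longrightarrow>
        quasilocal D \<and> API_domain D \<and> integral_closure_fls D = range fps_to_fls)
   \<and> (root_extension k UNIV \<longrightarrow> (API_domain D \<longleftrightarrow> bounded_root_extension k0 UNIV))
   \<and> (finite_degree k \<longrightarrow>
        (root_extension k UNIV \<longrightarrow> complete_local D \<and> AV_domain D)
      \<and> (bounded_root_extension k UNIV \<longrightarrow> complete_local D \<and> API_domain D))"
proof -
  have chp: "prime CHAR('a)" using p by (intro prime_CHAR_semidom) simp
  interpret T: thm7 k D m using k chp D lower by unfold_locales
  have R1: "quasilocal D \<and> AV_domain D \<and> integral_closure_fls D = range fps_to_fls"
    if r: "root_extension k UNIV"
  proof -
    have ap: "\<And>g. \<exists>n>0. g ^ n \<in> D" using T.pow_root[OF r] by blast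
    show ?thesis using T.quasilocal(2)[OF ap] T.AV[OF ap] T.int_closure[OF ap] by simp
  qed
  have R2: "API_domain D" if b: "bounded_root_extension k UNIV"
    using T.API_uniform[OF T.pow_bdd[OF b]] .
  have R3: "API_domain D \<longleftrightarrow> bounded_root_extension k0 UNIV" if r: "root_extension k UNIV"
  proof -
    have ap: "\<And>g. \<exists>n>0. g ^ n \<in> D" using T.pow_root[OF r] by blast
    show ?thesis unfolding k0_def
    proof
      assume "API_domain D"
      thus "bounded_root_extension ((\<lambda>f. f $ 0) ` D) UNIV" by (rule T.API_k0[OF ap])
    next
      assume "bounded_root_extension ((\<lambda>f. f $ 0) ` D) UNIV"
      thus "API_domain D" by (intro T.API_uniform T.k0_bdd_uniform[OF ap])
    qed
  qed
  have R4: "complete_local D" if fd: "finite_degree k" and r: "root_extension k UNIV"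
  proof -
    have ap: "\<And>g. \<exists>n>0. g ^ n \<in> D" using T.pow_root[OF r] by blast
    have mx: "maximal_ideal_in D {f \<in> D. f $ 0 = 0}" by (rule T.quasilocal(1)[OF ap])
    have ql: "quasilocal D" by (rule T.quasilocal(2)[OF ap])
    have "adic_complete D M'" if "maximal_ideal_in D M'" for M'
    proof -
      have "M' = {f \<in> D. f $ 0 = 0}" using ql mx that unfolding quasilocal_def by blast
      thus ?thesis using T.adic by simp
    qed
    thus ?thesis unfolding complete_local_def using T.noetherian[OF fd] ql by blast
  qed
  show ?thesis
    using R1 R2 R3 R4 T.bdd_root by blast
qed

end
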